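(* Let $c$ be a step speed function and $q\in\mathbb R$. Fix $z,w>0$. There exists a constant $C=C(z,w,c(\cdot-q))<\infty$ such that for all $0<\delta\le1$ and all $0\le a\le z$, $$\Gamma^q((a,0),(z,\delta))-\Gamma^q((a,0),(z,0))\le C\sqrt\delta,$$ and for all $0\le b\le w$, $$\Gamma^q((-b,b),(-w,w+\delta))-\Gamma^q((-b,b),(-w,w))\le C\sqrt\delta.$$
   Context: A step speed function is $c(x)=\sum_{m=1}^{L-1}r_m\mathbf 1_{(a_m,a_{m+1})}(x)+\sum_{m=2}^{L-1}\min\{r_{m-1},r_m\}\mathbf 1_{\{a_m\}}(x)$ with $-\infty=a_1<\dots<a_L=+\infty$ and $r_m>0$. $\mathcal W=\{(x,y):y\ge0,x\ge-y\}$; $\gamma(x,y)=(\sqrt{x+y}+\sqrt y)^2$. For points $P$ and $Q\in P+\mathcal W$, $\Gamma^q(P,Q)=\sup\int_0^1\frac{\gamma(\mathbf x'(s))}{c(x_1(s)-q)}ds$, the supremum over continuous piecewise $C^1$ paths $\mathbf x=(x_1,x_2):[0,1]\to\mathbb R^2$ with $\mathbf x(0)=P$, $\mathbf x(1)=Q$ and $\mathbf x'(s)\in\mathcal W$ wherever defined. *)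

theory Defs
  imports "HOL-Analysis.Analysis" "HOL-Library.Extended_Real"
begin

definition step_speed :: "(real \<Rightarrow> real) \<Rightarrow> bool" where
  "step_speed c \<longleftrightarrow> (\<exists>(L::nat) (a::nat \<Rightarrow> ereal) (r::nat \<Rightarrow> real).
     L \<ge> 2 \<and> a 1 = -\<infinity> \<and> a L = \<infinity> \<and>
     (\<forall>m. 1 \<le> m \<and> m < L \<longrightarrow> a m < a (m+1)) \<and>
     (\<forall>m. 1 \<le> m \<and> m \<le> L - 1 \<longrightarrow> r m > 0) \<and>
     (\<forall>x. c x = (\<Sum>m=1..L-1. r m * indicator {y. a m < ereal y \<and> ereal y < a (m+1)} x)
                + (\<Sum>m=2..L-1. min (r (m-1)) (r m) * indicator {y. ereal y = a m} x)))"

definition Wcone :: "(real \<times> real) set" where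
  "Wcone = {(x, y). y \<ge> 0 \<and> x \<ge> - y}"

definition gam :: "real \<times> real \<Rightarrow> real" where
  "gam v = (sqrt (fst v + snd v) + sqrt (snd v))^2"

definition pw_C1 :: "(real \<Rightarrow> real \<times> real) \<Rightarrow> bool" where
  "pw_C1 x \<longleftrightarrow> continuous_on {0..1} x \<and>
     (\<exists>T. finite T \<and> T \<subseteq> {0..1} \<and> 0 \<in> T \<and> 1 \<in> T \<and>
        (\<forall>s\<in>T. \<forall>t\<in>T. s < t \<and> {s<..<t} \<inter> T = {} \<longrightarrow>
           (\<exists>D. continuous_on {s..t} D \<and>
                (\<forall>u\<in>{s..t}. (x has_vector_derivative D u) (at u within {s..t})))))"

definition admissible_path :: "real \<times> real \<Rightarrow> real \<times> real \<Rightarrow> (real \<Rightarrow> real \<times> real) \<Rightarrow> bool" where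
  "admissible_path P Q x \<longleftrightarrow> pw_C1 x \<and> x 0 = P \<and> x 1 = Q \<and>
     (\<forall>s\<in>{0..1}. x differentiable (at s) \<longrightarrow> vector_derivative x (at s) \<in> Wcone)"

definition Gamma :: "(real \<Rightarrow> real) \<Rightarrow> real \<Rightarrow> real \<times> real \<Rightarrow> real \<times> real \<Rightarrow> real" where
  "Gamma c q P Q = Sup {integral {0..1} (\<lambda>s. gam (vector_derivative x (at s)) / c (fst (x s) - q)) | x.
       admissible_path P Q x}"

end

theory Submission imports Defs begin

definition pwconst :: "(real \<Rightarrow> real) \<Rightarrow> real set \<Rightarrow> bool" where
  "pwconst f S \<longleftrightarrow> finite S \<and> (\<forall>t. t \<notin> S \<longrightarrow> (\<forall>\<^sub>F t' in nhds t. f t' = f t))"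

lemma pwconst_deriv:
  assumes "pwconst f S" "t \<notin> S"
  shows "(f has_real_derivative 0) (at t)"
proof -
  have ev: "\<forall>\<^sub>F t' in nhds t. f t' = f t" using assms unfolding pwconst_def by auto
  have "((\<lambda>_. f t) has_real_derivative 0) (at t)" by simp
  then show ?thesis
    using DERIV_cong_ev[of t t "\<lambda>_. f t" f 0 0] ev by (simp add: eq_commute)
qed

lemma pwconst_isCont: "pwconst f S \<Longrightarrow> t \<notin> S \<Longrightarrow> isCont f t"
  using pwconst_deriv DERIV_isCont by blast

lemma pwconst_const_on:
  assumes "pwconst f S" "x \<le> y" "\<And>b. b \<in> S \<Longrightarrow> b < x \<or> b > y"
  shows "f x = f y"
proof (cases "x = y")
  case False
  then have "x < y" using assms by auto
  then show ?thesis
  proof -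
    have "continuous_on {x..y} f"
      using pwconst_isCont[OF assms(1)] assms(3) by (intro continuous_at_imp_continuous_on) force
    moreover have "(f has_real_derivative 0) (at u)" if "x < u" "u < y" for u
      using pwconst_deriv[OF assms(1)] assms(3) that by force
    ultimately show ?thesis using DERIV_isconst_end[of x y f] \<open>x < y\<close> by auto
  qed
qed simp

lemma pwconst_integrable:
  assumes "pwconst f S" "\<And>t. \<bar>f t\<bar> \<le> B"
  shows "f integrable_on {\<alpha>..\<beta>}"
proof -
  have fin: "finite S" using assms unfolding pwconst_def by auto
  have "continuous_on ({\<alpha>..\<beta>} - S) f"
    using pwconst_isCont[OF assms(1)] by (simp add: continuous_at_imp_continuous_on)
  then have "f \<in> borel_measurable (lebesgue_on ({\<alpha>..\<beta>} - S))"
    by (intro continuous_imp_measurable_on_sets_lebesgue) (auto intro: sets.Diff simp: fin finite_imp_closed)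
  then have "f measurable_on ({\<alpha>..\<beta>} - S)"
    by (subst measurable_on_iff_borel_measurable) (auto intro: sets.Diff simp: fin finite_imp_closed)
  then have "f measurable_on {\<alpha>..\<beta>}"
    by (rule measurable_on_spike_set) (auto intro: negligible_subset[OF negligible_finite[OF fin]])
  then have "f \<in> borel_measurable (lebesgue_on {\<alpha>..\<beta>})"
    by (subst measurable_on_iff_borel_measurable[symmetric]) auto
  then show ?thesis
    by (rule measurable_bounded_by_integrable_imp_integrable[where g="\<lambda>_. B"]) (use assms(2) in auto)
qed

lemma ftc_comp:
  assumes pw: "pwconst f S" and bnd: "\<And>t. \<bar>f t\<bar> \<le> B"
    and cont: "continuous_on {0..1} p" and finT: "finite T"
    and der: "\<And>s. s \<in> {0<..<1} - T \<Longrightarrow> (p has_real_derivative p' s) (at s)"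
    and mono: "\<And>s t. 0 \<le> s \<Longrightarrow> s < t \<Longrightarrow> t \<le> 1 \<Longrightarrow> p s < p t"
  shows "((\<lambda>s. p' s * f (p s)) has_integral (integral {p 0..p 1} f)) {0..1}"
proof -
  define G where "G u = integral {p 0..u} f" for u
  have finS: "finite S" using pw unfolding pwconst_def by auto
  have int: "f integrable_on {p 0..p 1}" by (rule pwconst_integrable[OF pw bnd])
  have rng: "p s \<in> {p 0..p 1}" if "s \<in> {0..1}" for s
  proof -
    have "p 0 \<le> p s" using that mono[of 0 s] by (cases "s = 0") auto
    moreover have "p s \<le> p 1" using that mono[of s 1] by (cases "s = 1") auto
    ultimately show ?thesis by simp
  qed
  have injp: "inj_on p {0..1}"
  proof (rule inj_onI)
    fix x y assume "x \<in> {0..1}" "y \<in> {0..1}" "p x = p y"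
    then show "x = y" using mono[of x y] mono[of y x] by (cases x y rule: linorder_cases) auto
  qed
  define E where "E = T \<union> (p -` S \<inter> {0..1})"
  have finE: "finite E" unfolding E_def using finT finite_vimage_IntI[OF finS injp] by auto
  have Gc: "continuous_on {0..1} (G \<circ> p)"
    apply (rule continuous_on_compose[OF cont])
    apply (rule continuous_on_subset[OF indefinite_integral_continuous_1[OF int, folded G_def]])
    using rng by auto
  have "((G \<circ> p) has_vector_derivative p' s * f (p s)) (at s)" if s: "s \<in> {0<..<1} - E" for s
  proof -
    have ps: "p s \<in> {p 0<..<p 1}" using s mono[of 0 s] mono[of s 1] by auto
    have nS: "p s \<notin> S" using s unfolding E_def by auto
    have "(G has_vector_derivative f (p s)) (at (p s) within ({p 0..p 1} - {}))"
      unfolding G_def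
      by (rule integral_has_vector_derivative_continuous_at[OF int])
         (use ps pwconst_isCont[OF pw nS] in \<open>auto intro: continuous_at_imp_continuous_within\<close>)
    then have "(G has_real_derivative f (p s)) (at (p s))"
    proof -
      have "interior {p 0..p 1} = {p 0<..<p 1}" by simp
      then have "at (p s) within {p 0..p 1} = at (p s)" using ps at_within_interior by metis
      then show ?thesis using \<open>(G has_vector_derivative f (p s)) (at (p s) within ({p 0..p 1} - {}))\<close>
        by (simp add: has_real_derivative_iff_has_vector_derivative)
    qed
    moreover have "(p has_real_derivative p' s) (at s)" using der s unfolding E_def by auto
    ultimately have "((G \<circ> p) has_real_derivative f (p s) * p' s) (at s)"
      by (rule DERIV_chain)
    then show ?thesis by (simp add: has_real_derivative_iff_has_vector_derivative mult.commute)
  qed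
  note dv = this
  have "((\<lambda>s. p' s * f (p s)) has_integral ((G \<circ> p) 1 - (G \<circ> p) 0)) {0..1}"
    apply (rule fundamental_theorem_of_calculus_interior_strong[where f="G \<circ> p" and a=0 and b=1, OF finE _ _ Gc])
    using dv by auto
  then show ?thesis by (simp add: G_def)
qed

lemma mono_from_deriv:
  assumes cont: "continuous_on {0..1} h" and finT: "finite T"
    and der: "\<And>s. s \<in> {0<..<1} - T \<Longrightarrow> (h has_real_derivative h' s) (at s)"
    and pos: "\<And>s. s \<in> {0<..<1} - T \<Longrightarrow> 0 \<le> h' s"
    and st: "0 \<le> s" "s \<le> t" "t \<le> 1"
  shows "h s \<le> h t"
proof -
  define k where "k x = (if x \<in> {0<..<1} - T then h' x else 0)" for x
  have "(k has_integral (h t - h s)) {s..t}"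
  proof (rule fundamental_theorem_of_calculus_interior_strong[where f=h and a=s and b=t, OF finT])
    show "s \<le> t" by fact
    show "continuous_on {s..t} h" using cont st by (auto intro: continuous_on_subset)
    fix x assume "x \<in> {s<..<t} - T"
    then have x: "x \<in> {0<..<1} - T" using st by auto
    then show "(h has_vector_derivative k x) (at x)"
      using der[OF x] by (simp add: k_def has_real_derivative_iff_has_vector_derivative)
  qed
  moreover have "\<And>x. x \<in> {s..t} \<Longrightarrow> 0 \<le> k x" using pos by (simp add: k_def)
  ultimately have "0 \<le> h t - h s" by (rule has_integral_nonneg)
  then show ?thesis by simp
qed

lemma ftc_path:
  assumes cont: "continuous_on {0..1} h" and finT: "finite T"
    and der: "\<And>s. s \<in> {0<..<1} - T \<Longrightarrow> (h has_real_derivative h' s) (at s)"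
  shows "(h' has_integral (h 1 - h 0)) {0..1}"
  by (rule fundamental_theorem_of_calculus_interior_strong[where f=h and a=0 and b=1, OF finT])
     (use cont der in \<open>simp_all add: has_real_derivative_iff_has_vector_derivative\<close>)


lemma ev_indicator_Icc:
  fixes t :: real
  assumes "t \<noteq> \<alpha>" "t \<noteq> \<beta>"
  shows "\<forall>\<^sub>F t' in nhds t. indicator {\<alpha>..\<beta>} t' = (indicator {\<alpha>..\<beta>} t :: real)"
proof -
  consider "t \<in> {\<alpha><..<\<beta>}" | "t \<in> {..<\<alpha>}" | "t \<in> {\<beta><..}" using assms by force
  then show ?thesis
  proof cases
    case 1
    show ?thesis using eventually_nhds_in_open[OF _ 1] by (rule eventually_mono) (use 1 in \<open>auto simp: indicator_def\<close>)
  next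
    case 2
    show ?thesis using eventually_nhds_in_open[OF _ 2] by (rule eventually_mono) (use 2 in \<open>auto simp: indicator_def\<close>)
  next
    case 3
    show ?thesis using eventually_nhds_in_open[OF _ 3] by (rule eventually_mono) (use 3 in \<open>auto simp: indicator_def\<close>)
  qed
qed

lemma integral_indicator_Icc_le:
  assumes "0 \<le> e"
  shows "integral {\<alpha>..\<beta>} (indicator {b..b+e} :: real \<Rightarrow> real) \<le> e"
proof -
  have "integral {\<alpha>..\<beta>} (indicator {b..b+e} :: real \<Rightarrow> real) = integral {\<alpha>..\<beta>} (\<lambda>x. if x \<in> {b..b+e} then (1::real) else 0)"
    by (rule arg_cong[where f="integral _"]) (auto simp: indicator_def)
  also have "\<dots> = integral ({b..b+e} \<inter> {\<alpha>..\<beta>}) (\<lambda>x. 1::real)" by (rule integral_restrict_Int)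
  also have "\<dots> = Henstock_Kurzweil_Integration.content {max b \<alpha>..min (b+e) \<beta>}" by (simp add: Int_atLeastAtMost)
  also have "\<dots> \<le> e" using assms by (simp add: content_real_if min_def max_def)
  finally show ?thesis .
qed

lemma core_bound:
  assumes pw: "pwconst f S" and f0: "\<And>t. 0 \<le> f t" and fM: "\<And>t. f t \<le> M"
    and cont: "continuous_on {0..1} y" and finT: "finite T"
    and der: "\<And>s. s \<in> {0<..<1} - T \<Longrightarrow> (y has_real_derivative y' s) (at s)"
    and ypos: "\<And>s. s \<in> {0<..<1} - T \<Longrightarrow> 0 \<le> y' s"
    and d: "0 < d"
    and xi: "\<And>s. s \<in> {0<..<1} - T \<Longrightarrow> y s - d \<le> \<xi> s \<and> \<xi> s \<le> y s"
  shows "\<exists>F I. (F has_integral I) {0..1} \<and> I \<le> integral {y 0..y 1} f + M * (2 * card S + 1) * d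
     \<and> (\<forall>s\<in>{0<..<1} - T. y' s * f (\<xi> s) \<le> F s)"
proof -
  have finS: "finite S" using pw unfolding pwconst_def by auto
  have M0: "0 \<le> M" using f0[of 0] fM[of 0] by linarith
  define p where "p s = y s + d * s" for s
  define fh where "fh t = f t + M * (\<Sum>b\<in>S. indicator {b..b + 2*d} t)" for t
  have ymono: "y s \<le> y t" if "0 \<le> s" "s \<le> t" "t \<le> 1" for s t
    by (rule mono_from_deriv[OF cont finT der ypos that]) auto
  have pmono: "p s < p t" if "0 \<le> s" "s < t" "t \<le> 1" for s t
    using ymono[of s t] that d unfolding p_def by (smt (verit) mult_strict_left_mono)
  have pcont: "continuous_on {0..1} p" unfolding p_def by (intro continuous_intros cont)
  have pder: "(p has_real_derivative (y' s + d)) (at s)" if "s \<in> {0<..<1} - T" for s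
    unfolding p_def using der[OF that] by (auto intro!: derivative_eq_intros)
  have ind_pw: "\<forall>\<^sub>F t' in nhds t. indicator {b..b + 2*d} t' = (indicator {b..b + 2*d} t :: real)"
    if "t \<noteq> b" "t \<noteq> b + 2*d" for t b
    by (rule ev_indicator_Icc) (use that in auto)
  have fhpw: "pwconst fh (S \<union> (\<lambda>b. b + 2*d) ` S)"
    unfolding pwconst_def
  proof (intro conjI allI impI)
    show "finite (S \<union> (\<lambda>b. b + 2*d) ` S)" using finS by auto
    fix t assume t: "t \<notin> S \<union> (\<lambda>b. b + 2*d) ` S"
    have e1: "\<forall>\<^sub>F t' in nhds t. f t' = f t" using pw t unfolding pwconst_def by auto
    have e2: "\<forall>\<^sub>F t' in nhds t. \<forall>b\<in>S. indicator {b..b + 2*d} t' = (indicator {b..b + 2*d} t :: real)"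
    proof (rule eventually_ball_finite[OF finS], intro ballI)
      fix b assume "b \<in> S"
      then have "t \<noteq> b" "t \<noteq> b + 2*d" using t by auto
      then show "\<forall>\<^sub>F t' in nhds t. indicator {b..b + 2*d} t' = (indicator {b..b + 2*d} t :: real)"
        by (rule ind_pw)
    qed
    show "\<forall>\<^sub>F t' in nhds t. fh t' = fh t"
      using eventually_conj[OF e1 e2]
    proof (rule eventually_mono)
      fix t' assume h: "f t' = f t \<and> (\<forall>b\<in>S. indicator {b..b + 2*d} t' = (indicator {b..b + 2*d} t :: real))"
      then have "(\<Sum>b\<in>S. indicator {b..b + 2*d} t' :: real) = (\<Sum>b\<in>S. indicator {b..b + 2*d} t)"
        by (intro sum.cong) auto
      then show "fh t' = fh t" using h by (simp add: fh_def)
    qed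
  qed
  have fh_eq: "fh = (\<lambda>t. f t + M * (\<Sum>b\<in>S. indicator {b..b + 2*d} t))"
    by (rule ext) (simp add: fh_def)
  have ind01: "0 \<le> (indicator A x :: real) \<and> (indicator A x :: real) \<le> 1" for A x
    by (simp add: indicator_def)
  have sumS: "(\<Sum>b\<in>S. indicator {b..b + 2*d} t) \<le> real (card S)" for t
    using sum_mono[of S "\<lambda>b. indicator {b..b + 2*d} t" "\<lambda>_. 1::real"] ind01 by auto
  have sumS0: "0 \<le> (\<Sum>b\<in>S. indicator {b..b + 2*d} t :: real)" for t
    using ind01 by (auto intro: sum_nonneg)
  have fhb: "\<bar>fh t\<bar> \<le> M + M * card S" for t
  proof -
    have "0 \<le> fh t" unfolding fh_def using f0[of t] M0 sumS0[of t] by auto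
    moreover have "fh t \<le> M + M * card S" unfolding fh_def
      using fM[of t] mult_left_mono[OF sumS[of t] M0] by linarith
    ultimately show ?thesis by linarith
  qed
  have fh0: "0 \<le> fh t" for t unfolding fh_def using f0[of t] M0 sumS0[of t] by auto
  have hI: "((\<lambda>s. (y' s + d) * fh (p s)) has_integral integral {p 0..p 1} fh) {0..1}"
    by (rule ftc_comp[OF fhpw fhb pcont finT pder pmono])
  have p01: "p 0 = y 0" "p 1 = y 1 + d" by (auto simp: p_def)
  have y01: "y 0 \<le> y 1" using ymono[of 0 1] by simp
  have fint: "f integrable_on {\<alpha>..\<beta>}" for \<alpha> \<beta>
    by (rule pwconst_integrable[OF pw]) (use f0 fM in \<open>auto simp: abs_le_iff intro: order_trans[OF _ fM]\<close>)
  have indint: "(indicator {b..b + 2*d} :: real \<Rightarrow> real) integrable_on {\<alpha>..\<beta>}" for b \<alpha> \<beta>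
  proof (rule pwconst_integrable[where S="{b, b+2*d}" and B=1])
    show "pwconst (indicator {b..b + 2*d}) {b, b + 2*d}"
      unfolding pwconst_def using ind_pw by auto
  qed (simp add: indicator_def)
  have "integral {y 0..y 1 + d} fh = integral {y 0..y 1 + d} f
        + M * (\<Sum>b\<in>S. integral {y 0..y 1 + d} (indicator {b..b + 2*d}))"
  proof -
    have i2: "(\<lambda>t. \<Sum>b\<in>S. indicator {b..b + 2*d} t :: real) integrable_on {y 0..y 1 + d}"
      by (rule integrable_sum[OF finS]) (rule indint)
    have "integral {y 0..y 1 + d} (\<lambda>t. f t + M * (\<Sum>b\<in>S. indicator {b..b + 2*d} t)) =
          integral {y 0..y 1 + d} f + integral {y 0..y 1 + d} (\<lambda>t. M * (\<Sum>b\<in>S. indicator {b..b + 2*d} t))"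
    proof (rule integral_add[OF fint])
      show "(\<lambda>t. M * (\<Sum>b\<in>S. indicator {b..b + 2*d} t :: real)) integrable_on {y 0..y 1 + d}"
        using integrable_on_cmult_left[OF i2, of M] by simp
    qed
    also have "integral {y 0..y 1 + d} (\<lambda>t. M * (\<Sum>b\<in>S. indicator {b..b + 2*d} t)) =
       M * integral {y 0..y 1 + d} (\<lambda>t. \<Sum>b\<in>S. indicator {b..b + 2*d} t :: real)"
      by (rule integral_mult_right)
    also have "integral {y 0..y 1 + d} (\<lambda>t. \<Sum>b\<in>S. indicator {b..b + 2*d} t :: real) =
       (\<Sum>b\<in>S. integral {y 0..y 1 + d} (indicator {b..b + 2*d}))"
      by (rule integral_sum[OF finS indint])
    finally show ?thesis by (simp add: fh_eq)
  qed
  also have "\<dots> \<le> integral {y 0..y 1 + d} f + M * (card S * (2*d))"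
  proof -
    have "(\<Sum>b\<in>S. integral {y 0..y 1 + d} (indicator {b..b + 2*d} :: real \<Rightarrow> real)) \<le> (\<Sum>b\<in>S. 2*d)"
      by (rule sum_mono) (rule integral_indicator_Icc_le, use d in auto)
    then show ?thesis using M0 by (auto intro: mult_left_mono)
  qed
  also have "integral {y 0..y 1 + d} f = integral {y 0..y 1} f + integral {y 1..y 1 + d} f"
    using Henstock_Kurzweil_Integration.integral_combine[OF y01 _ fint, of "y 1 + d"] d by simp
  also have "integral {y 1..y 1 + d} f \<le> M * d"
  proof -
    have "integral {y 1..y 1 + d} f \<le> integral {y 1..y 1 + d} (\<lambda>_. M)"
      by (rule integral_le[OF fint]) (use fM in auto)
    then show ?thesis using d by (simp add: mult.commute)
  qed
  finally have Ile: "integral {p 0..p 1} fh \<le> integral {y 0..y 1} f + M * (2 * card S + 1) * d"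
    unfolding p01 by (simp add: algebra_simps)
  have ptw: "y' s * f (\<xi> s) \<le> (y' s + d) * fh (p s)" if s: "s \<in> {0<..<1} - T" for s
  proof -
    have xs: "y s - d \<le> \<xi> s" "\<xi> s \<le> y s" using xi[OF s] by auto
    have ps: "p s - 2*d \<le> \<xi> s" "\<xi> s \<le> p s"
      using xs s d unfolding p_def by (auto simp: mult_le_cancel_left1 intro: order_trans) (smt (verit) mult_left_le)+
    have "f (\<xi> s) \<le> fh (p s)"
    proof (cases "\<exists>b\<in>S. \<xi> s \<le> b \<and> b \<le> p s")
      case True
      then obtain b where b: "b \<in> S" "\<xi> s \<le> b" "b \<le> p s" by auto
      have "indicator {b..b + 2*d} (p s) = (1::real)" using b ps by (auto simp: indicator_def)
      then have "1 \<le> (\<Sum>b\<in>S. indicator {b..b + 2*d} (p s) :: real)"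
        using member_le_sum[OF b(1), of "\<lambda>b. indicator {b..b + 2*d} (p s) :: real"] ind01 finS by auto
      then have "M \<le> M * (\<Sum>b\<in>S. indicator {b..b + 2*d} (p s))" using M0
        by (metis mult.right_neutral mult_left_mono)
      then show ?thesis unfolding fh_def using fM[of "\<xi> s"] f0[of "p s"] by linarith
    next
      case False
      then have "f (\<xi> s) = f (p s)"
        by (intro pwconst_const_on[OF pw ps(2)]) force
      then show ?thesis unfolding fh_def using M0 sumS0[of "p s"] by auto
    qed
    moreover have "0 \<le> y' s" using ypos[OF s] .
    ultimately have "y' s * f (\<xi> s) \<le> y' s * fh (p s)" by (rule mult_left_mono)
    also have "\<dots> \<le> (y' s + d) * fh (p s)" using fh0[of "p s"] d by (simp add: distrib_right)
    finally show ?thesis .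
  qed
  show ?thesis using hI Ile ptw by blast
qed

lemma ev_open_set:
  assumes "open U" "t \<in> U" "\<And>u. u \<in> U \<Longrightarrow> P u"
  shows "\<forall>\<^sub>F u in nhds t. P u"
  using eventually_nhds_in_open[OF assms(1,2)] by (rule eventually_mono) (use assms(3) in blast)

lemma ev_indicator_ereal:
  fixes t :: real and \<alpha> \<beta> :: ereal
  assumes "t \<noteq> real_of_ereal \<alpha>" "t \<noteq> real_of_ereal \<beta>"
  shows "\<forall>\<^sub>F u in nhds t. indicator {y. \<alpha> < ereal y \<and> ereal y < \<beta>} u
          = (indicator {y. \<alpha> < ereal y \<and> ereal y < \<beta>} t :: real)"
proof -
  have na: "ereal t \<noteq> \<alpha>" "ereal t \<noteq> \<beta>" using assms by auto
  have ce: "continuous_on UNIV (\<lambda>y::real. ereal y)" by (intro continuous_intros)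
  have cc: "continuous_on UNIV (\<lambda>y::real. c)" for c :: ereal by (intro continuous_intros)
  have o1: "open {y. \<alpha> < ereal y}" by (rule open_Collect_less[OF cc ce])
  have o2: "open {y. ereal y < \<beta>}" by (rule open_Collect_less[OF ce cc])
  consider "\<alpha> < ereal t \<and> ereal t < \<beta>" | "ereal t < \<alpha>" | "\<beta> < ereal t"
    using na by (meson linorder_neqE)
  then show ?thesis
  proof cases
    case 1
    show ?thesis by (rule ev_open_set[OF open_Int[OF o1 o2]]) (use 1 in \<open>auto simp: indicator_def\<close>)
  next
    case 2
    have o3: "open {y. ereal y < \<alpha>}" by (rule open_Collect_less[OF ce cc])
    show ?thesis by (rule ev_open_set[OF o3]) (use 2 in \<open>auto simp: indicator_def\<close>)
  next
    case 3
    show ?thesis by (rule ev_open_set[OF open_Collect_less[OF cc ce, of \<beta>]]) (use 3 in \<open>auto simp: indicator_def\<close>)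
  qed
qed

lemma ev_indicator_ereal_pt:
  fixes t :: real and \<alpha> :: ereal
  assumes "t \<noteq> real_of_ereal \<alpha>"
  shows "\<forall>\<^sub>F u in nhds t. indicator {y. ereal y = \<alpha>} u = (indicator {y. ereal y = \<alpha>} t :: real)"
proof -
  have na: "ereal t \<noteq> \<alpha>" using assms by auto
  have ce: "continuous_on UNIV (\<lambda>y::real. ereal y)" by (intro continuous_intros)
  have cc: "continuous_on UNIV (\<lambda>y::real. c)" for c :: ereal by (intro continuous_intros)
  show ?thesis by (rule ev_open_set[OF open_Collect_neq[OF ce cc, of \<alpha>]]) (use na in \<open>auto simp: indicator_def\<close>)
qed

lemma step_speed_facts:
  assumes "step_speed c"
  shows "\<exists>S m M. pwconst c S \<and> 0 < m \<and> (\<forall>x. m \<le> c x \<and> c x \<le> M)"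
proof -
  obtain L :: nat and a :: "nat \<Rightarrow> ereal" and r :: "nat \<Rightarrow> real" where
    L2: "L \<ge> 2" and a1: "a 1 = -\<infinity>" and aL: "a L = \<infinity>"
    and amono: "\<forall>m. 1 \<le> m \<and> m < L \<longrightarrow> a m < a (m+1)"
    and rpos: "\<forall>m. 1 \<le> m \<and> m \<le> L - 1 \<longrightarrow> r m > 0"
    and ceq: "\<forall>x. c x = (\<Sum>m=1..L-1. r m * indicator {y. a m < ereal y \<and> ereal y < a (m+1)} x)
                + (\<Sum>m=2..L-1. min (r (m-1)) (r m) * indicator {y. ereal y = a m} x)"
    using assms unfolding step_speed_def by blast
  define S where "S = (\<lambda>m. real_of_ereal (a m)) ` {1..L}"
  define mm where "mm = Min (r ` {1..L-1})"
  define MM where "MM = (\<Sum>m=1..L-1. r m) + (\<Sum>m=2..L-1. min (r (m-1)) (r m))"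
  have finS: "finite S" unfolding S_def by auto
  have pw: "pwconst c S"
    unfolding pwconst_def
  proof (intro conjI allI impI finS)
    fix t assume t: "t \<notin> S"
    have e1: "\<forall>\<^sub>F u in nhds t. \<forall>m\<in>{1..L-1}. indicator {y. a m < ereal y \<and> ereal y < a (m+1)} u
          = (indicator {y. a m < ereal y \<and> ereal y < a (m+1)} t :: real)"
    proof (rule eventually_ball_finite, simp, intro ballI)
      fix m assume m: "m \<in> {1..L-1}"
      have "m \<in> {1..L}" "m + 1 \<in> {1..L}" using m L2 by auto
      then have "t \<noteq> real_of_ereal (a m)" "t \<noteq> real_of_ereal (a (m+1))" using t unfolding S_def by force+
      then show "\<forall>\<^sub>F u in nhds t. indicator {y. a m < ereal y \<and> ereal y < a (m+1)} u
          = (indicator {y. a m < ereal y \<and> ereal y < a (m+1)} t :: real)"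
        by (rule ev_indicator_ereal)
    qed
    have e2: "\<forall>\<^sub>F u in nhds t. \<forall>m\<in>{2..L-1}. indicator {y. ereal y = a m} u
          = (indicator {y. ereal y = a m} t :: real)"
    proof (rule eventually_ball_finite, simp, intro ballI)
      fix m assume m: "m \<in> {2..L-1}"
      have "m \<in> {1..L}" using m L2 by auto
      then have "t \<noteq> real_of_ereal (a m)" using t unfolding S_def by force
      then show "\<forall>\<^sub>F u in nhds t. indicator {y. ereal y = a m} u = (indicator {y. ereal y = a m} t :: real)"
        by (rule ev_indicator_ereal_pt)
    qed
    show "\<forall>\<^sub>F u in nhds t. c u = c t"
      using eventually_conj[OF e1 e2]
    proof (rule eventually_mono)
      fix u assume h: "(\<forall>m\<in>{1..L-1}. indicator {y. a m < ereal y \<and> ereal y < a (m+1)} u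
          = (indicator {y. a m < ereal y \<and> ereal y < a (m+1)} t :: real)) \<and>
          (\<forall>m\<in>{2..L-1}. indicator {y. ereal y = a m} u = (indicator {y. ereal y = a m} t :: real))"
      have s1: "(\<Sum>m=1..L-1. r m * indicator {y. a m < ereal y \<and> ereal y < a (m+1)} u)
              = (\<Sum>m=1..L-1. r m * indicator {y. a m < ereal y \<and> ereal y < a (m+1)} t)"
        using h by (intro sum.cong) auto
      have s2: "(\<Sum>m=2..L-1. min (r (m-1)) (r m) * indicator {y. ereal y = a m} u)
              = (\<Sum>m=2..L-1. min (r (m-1)) (r m) * indicator {y. ereal y = a m} t)"
        using h by (intro sum.cong) auto
      show "c u = c t" using ceq s1 s2 by simp
    qed
  qed
  have rne: "r ` {1..L-1} \<noteq> {}" using L2 by auto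
  have mpos: "0 < mm" unfolding mm_def using rpos rne by (subst Min_gr_iff) auto
  have mle: "mm \<le> r j" if "j \<in> {1..L-1}" for j unfolding mm_def using that by auto
  have t1nn: "0 \<le> r m * indicator {y. a m < ereal y \<and> ereal y < a (m+1)} x" if "m \<in> {1..L-1}" for m x
    using rpos that by (auto simp: indicator_def less_imp_le)
  have t2nn: "0 \<le> min (r (m-1)) (r m) * indicator {y. ereal y = a m} x" if "m \<in> {2..L-1}" for m x
    using rpos that by (auto simp: indicator_def less_imp_le)
  have bounds: "mm \<le> c x \<and> c x \<le> MM" for x
  proof
    define A where "A = (\<Sum>m=1..L-1. r m * indicator {y. a m < ereal y \<and> ereal y < a (m+1)} x)"
    define B where "B = (\<Sum>m=2..L-1. min (r (m-1)) (r m) * indicator {y. ereal y = a m} x)"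
    have cx: "c x = A + B" using ceq by (simp add: A_def B_def)
    have A0: "0 \<le> A" unfolding A_def by (rule sum_nonneg) (rule t1nn)
    have B0: "0 \<le> B" unfolding B_def by (rule sum_nonneg) (rule t2nn)
    have "A \<le> (\<Sum>m=1..L-1. r m)" unfolding A_def
      by (rule sum_mono) (use rpos in \<open>auto simp: indicator_def less_imp_le\<close>)
    moreover have "B \<le> (\<Sum>m=2..L-1. min (r (m-1)) (r m))" unfolding B_def
      by (rule sum_mono) (use rpos in \<open>auto simp: indicator_def less_imp_le\<close>)
    ultimately show "c x \<le> MM" unfolding cx MM_def by linarith
    define J where "J = {j \<in> {1..L-1}. ereal x < a (j+1)}"
    have LJ: "L - 1 \<in> J" using L2 aL unfolding J_def by auto
    have finJ: "finite J" unfolding J_def by auto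
    define j where "j = Min J"
    have jJ: "j \<in> J" unfolding j_def using finJ LJ Min_in by blast
    have jmin: "\<And>i. i \<in> J \<Longrightarrow> j \<le> i" unfolding j_def using finJ by auto
    have j1: "j \<in> {1..L-1}" "ereal x < a (j+1)" using jJ unfolding J_def by auto
    have "a j < ereal x \<or> (j \<ge> 2 \<and> ereal x = a j)"
    proof (cases "j = 1")
      case True then show ?thesis using a1 by simp
    next
      case False
      then have "j - 1 \<notin> J" using jmin[of "j-1"] j1 by fastforce
      then have "\<not> ereal x < a j" using j1 False unfolding J_def by auto
      then show ?thesis using False j1 by auto
    qed
    then show "mm \<le> c x"
    proof
      assume h: "a j < ereal x"
      have "r j * indicator {y. a j < ereal y \<and> ereal y < a (j+1)} x = r j"
        using h j1 by (simp add: indicator_def)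
      moreover have "r j * indicator {y. a j < ereal y \<and> ereal y < a (j+1)} x \<le> A"
        unfolding A_def by (rule member_le_sum[OF j1(1)]) (use t1nn in auto)
      ultimately show ?thesis using mle[OF j1(1)] B0 cx by linarith
    next
      assume h: "j \<ge> 2 \<and> ereal x = a j"
      then have j2: "j \<in> {2..L-1}" using j1 by auto
      have "min (r (j-1)) (r j) * indicator {y. ereal y = a j} x = min (r (j-1)) (r j)"
        using h by (simp add: indicator_def)
      moreover have "min (r (j-1)) (r j) * indicator {y. ereal y = a j} x \<le> B"
        unfolding B_def by (rule member_le_sum[OF j2]) (use t2nn in auto)
      moreover have "j - 1 \<in> {1..L-1}" using j2 by auto
      then have "mm \<le> r (j-1)" by (rule mle)
      moreover have "mm \<le> r j" using mle[of j] j2 by simp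
      moreover have "mm \<le> min (r (j-1)) (r j)" using \<open>mm \<le> r (j-1)\<close> \<open>mm \<le> r j\<close> by simp
      ultimately show ?thesis using A0 cx by linarith
    qed
  qed
  show ?thesis using pw mpos bounds by blast
qed

lemma pwconst_affine:
  assumes "pwconst f S" "\<sigma> \<noteq> 0"
  shows "pwconst (\<lambda>t. h (f (\<sigma> * t + \<tau>))) ((\<lambda>s. (s - \<tau>) / \<sigma>) ` S)"
  unfolding pwconst_def
proof (intro conjI allI impI)
  show "finite ((\<lambda>s. (s - \<tau>) / \<sigma>) ` S)" using assms unfolding pwconst_def by auto
  fix t assume t: "t \<notin> (\<lambda>s. (s - \<tau>) / \<sigma>) ` S"
  have "\<sigma> * t + \<tau> \<notin> S"
  proof
    assume "\<sigma> * t + \<tau> \<in> S"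
    moreover have "t = ((\<sigma> * t + \<tau>) - \<tau>) / \<sigma>" using assms(2) by simp
    ultimately show False using t by blast
  qed
  then have ev: "\<forall>\<^sub>F u in nhds (\<sigma> * t + \<tau>). f u = f (\<sigma> * t + \<tau>)" using assms unfolding pwconst_def by auto
  have lim: "((\<lambda>u. \<sigma> * u + \<tau>) \<longlongrightarrow> \<sigma> * t + \<tau>) (nhds t)"
    by (intro tendsto_intros) (simp add: tendsto_ident_at filterlim_ident)
  show "\<forall>\<^sub>F u in nhds t. h (f (\<sigma> * u + \<tau>)) = h (f (\<sigma> * t + \<tau>))"
  proof -
    have "\<forall>\<^sub>F u in nhds t. f (\<sigma> * u + \<tau>) = f (\<sigma> * t + \<tau>)"
      using lim[unfolded filterlim_iff, rule_format, OF ev] .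
    then show ?thesis by (rule eventually_mono) simp
  qed
qed

lemma adm_deriv:
  assumes "admissible_path P Q x"
  shows "\<exists>T. finite T \<and> continuous_on {0..1} x \<and> x 0 = P \<and> x 1 = Q \<and>
    (\<forall>s\<in>{0<..<1} - T. (x has_vector_derivative vector_derivative x (at s)) (at s)
        \<and> vector_derivative x (at s) \<in> Wcone)"
proof -
  have pw: "pw_C1 x" and x0: "x 0 = P" and x1: "x 1 = Q"
    and W: "\<forall>s\<in>{0..1}. x differentiable (at s) \<longrightarrow> vector_derivative x (at s) \<in> Wcone"
    using assms unfolding admissible_path_def by auto
  obtain T where cont: "continuous_on {0..1} x" and finT: "finite T" and T01: "T \<subseteq> {0..1}"
    and T0: "0 \<in> T" and T1: "1 \<in> T"
    and pieces: "\<forall>s\<in>T. \<forall>t\<in>T. s < t \<and> {s<..<t} \<inter> T = {} \<longrightarrow>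
           (\<exists>D. continuous_on {s..t} D \<and> (\<forall>u\<in>{s..t}. (x has_vector_derivative D u) (at u within {s..t})))"
    using pw unfolding pw_C1_def by blast
  have "(x has_vector_derivative vector_derivative x (at s)) (at s) \<and> vector_derivative x (at s) \<in> Wcone"
    if s: "s \<in> {0<..<1} - T" for s
  proof -
    define lo where "lo = Max {t\<in>T. t < s}"
    define hi where "hi = Min {t\<in>T. s < t}"
    have f1: "finite {t\<in>T. t < s}" "finite {t\<in>T. s < t}" using finT by auto
    have n1: "0 \<in> {t\<in>T. t < s}" "1 \<in> {t\<in>T. s < t}" using s T0 T1 by auto
    have lo: "lo \<in> T" "lo < s" using Max_in[OF f1(1)] n1 unfolding lo_def by auto
    have hi: "hi \<in> T" "s < hi" using Min_in[OF f1(2)] n1 unfolding hi_def by auto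
    have gap: "{lo<..<hi} \<inter> T = {}"
    proof (rule ccontr)
      assume "{lo<..<hi} \<inter> T \<noteq> {}"
      then obtain t where t: "t \<in> T" "lo < t" "t < hi" by auto
      have "t \<noteq> s" using t s by auto
      then consider "t < s" | "s < t" by linarith
      then show False
      proof cases
        case 1 then have "t \<le> lo" unfolding lo_def using f1 t by auto
        then show False using t by auto
      next
        case 2 then have "hi \<le> t" unfolding hi_def using f1 t by auto
        then show False using t by auto
      qed
    qed
    have lohi: "lo < hi" using lo hi by linarith
    have "\<exists>D. continuous_on {lo..hi} D \<and> (\<forall>u\<in>{lo..hi}. (x has_vector_derivative D u) (at u within {lo..hi}))"
      using pieces lo(1) hi(1) lohi gap by blast
    then obtain D where D: "\<forall>u\<in>{lo..hi}. (x has_vector_derivative D u) (at u within {lo..hi})"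
      by blast
    have "(x has_vector_derivative D s) (at s within {lo..hi})" using D lo hi by auto
    then have "(x has_vector_derivative D s) (at s within {lo<..<hi})"
      by (rule has_vector_derivative_within_subset) auto
    then have dx: "(x has_vector_derivative D s) (at s)"
      using lo hi at_within_open[of s "{lo<..<hi}"] by simp
    then have vd: "vector_derivative x (at s) = D s" by (rule vector_derivative_at)
    have "x differentiable (at s)" using dx by (rule differentiableI_vector)
    moreover have "s \<in> {0..1}" using s by simp
    ultimately have "vector_derivative x (at s) \<in> Wcone" using W by blast
    then show ?thesis using dx vd by simp
  qed
  then show ?thesis using finT cont x0 x1 by blast
qed

lemma hvd_fst: "(x has_vector_derivative D) F \<Longrightarrow> ((\<lambda>s. fst (x s)) has_real_derivative fst D) F"
  unfolding has_real_derivative_iff_has_vector_derivative has_vector_derivative_def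
  by (drule has_derivative_fst) simp

lemma hvd_snd: "(x has_vector_derivative D) F \<Longrightarrow> ((\<lambda>s. snd (x s)) has_real_derivative snd D) F"
  unfolding has_real_derivative_iff_has_vector_derivative has_vector_derivative_def
  by (drule has_derivative_snd) simp

definition lin :: "real \<times> real \<Rightarrow> real \<times> real \<Rightarrow> real \<Rightarrow> real \<times> real" where
  "lin P Q s = P + s *\<^sub>R (Q - P)"

lemma lin_deriv: "(lin P Q has_vector_derivative (Q - P)) (at s within U)"
  unfolding lin_def by (auto intro!: derivative_eq_intros)

lemma lin_vd: "vector_derivative (lin P Q) (at s) = Q - P"
  by (rule vector_derivative_at[OF lin_deriv])

lemma lin_adm:
  assumes "Q - P \<in> Wcone"
  shows "admissible_path P Q (lin P Q)"
  unfolding admissible_path_def pw_C1_def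
proof (intro conjI)
  show "continuous_on {0..1} (lin P Q)" unfolding lin_def by (intro continuous_intros)
  show "lin P Q 0 = P" "lin P Q 1 = Q" by (auto simp: lin_def)
  show "\<forall>s\<in>{0..1}. lin P Q differentiable at s \<longrightarrow> vector_derivative (lin P Q) (at s) \<in> Wcone"
    using assms by (simp add: lin_vd)
  show "\<exists>T. finite T \<and> T \<subseteq> {0..1} \<and> 0 \<in> T \<and> 1 \<in> T \<and>
        (\<forall>s\<in>T. \<forall>t\<in>T. s < t \<and> {s<..<t} \<inter> T = {} \<longrightarrow>
           (\<exists>D. continuous_on {s..t} D \<and>
                (\<forall>u\<in>{s..t}. (lin P Q has_vector_derivative D u) (at u within {s..t}))))"
    by (rule exI[of _ "{0,1}"]) (auto intro!: exI[of _ "\<lambda>_. Q - P"] lin_deriv)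
qed

lemma integral_le_spike:
  fixes \<Phi> B :: "real \<Rightarrow> real"
  assumes finE: "finite E" and hB: "(B has_integral IB) {0..1}"
    and le: "\<And>s. s \<in> {0..1} - E \<Longrightarrow> \<Phi> s \<le> B s"
    and nn: "\<And>s. s \<in> {0..1} - E \<Longrightarrow> 0 \<le> \<Phi> s"
  shows "integral {0..1} \<Phi> \<le> IB"
proof -
  define B' where "B' s = (if s \<in> E then \<Phi> s else B s)" for s
  have hB': "(B' has_integral IB) {0..1}"
    by (rule has_integral_spike_finite[OF finE _ hB]) (simp add: B'_def)
  define B'' where "B'' s = (if s \<in> E then 0 else B s)" for s
  have hB'': "(B'' has_integral IB) {0..1}"
    by (rule has_integral_spike_finite[OF finE _ hB]) (simp add: B''_def)
  have IB0: "0 \<le> IB"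
    by (rule has_integral_nonneg[OF hB'']) (use le nn in \<open>force simp: B''_def\<close>)
  show ?thesis
  proof (cases "\<Phi> integrable_on {0..1}")
    case True
    show ?thesis
      by (rule has_integral_le[OF integrable_integral[OF True] hB']) (use le in \<open>auto simp: B'_def\<close>)
  next
    case False
    then show ?thesis using IB0 by (simp add: not_integrable_integral)
  qed
qed

lemma line_value:
  assumes pw: "pwconst f S" and bnd: "\<And>t. \<bar>f t\<bar> \<le> B" and ab: "\<alpha> \<le> \<beta>"
  shows "integral {0..1} (\<lambda>s. (\<beta> - \<alpha>) * f (\<alpha> + s * (\<beta> - \<alpha>))) = integral {\<alpha>..\<beta>} f"
proof (cases "\<alpha> = \<beta>")
  case True then show ?thesis by simp
next
  case False
  then have lt: "\<alpha> < \<beta>" using ab by simp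
  have "((\<lambda>s. (\<beta> - \<alpha>) * f (\<alpha> + s * (\<beta> - \<alpha>))) has_integral
         integral {\<alpha> + 0 * (\<beta> - \<alpha>)..\<alpha> + 1 * (\<beta> - \<alpha>)} f) {0..1}"
  proof (rule ftc_comp[OF pw bnd _ finite.emptyI, where p="\<lambda>s. \<alpha> + s * (\<beta> - \<alpha>)"])
    show "continuous_on {0..1} (\<lambda>s. \<alpha> + s * (\<beta> - \<alpha>))" by (intro continuous_intros)
    show "((\<lambda>s. \<alpha> + s * (\<beta> - \<alpha>)) has_real_derivative \<beta> - \<alpha>) (at s)" for s
      by (auto intro!: derivative_eq_intros)
    show "\<alpha> + s * (\<beta> - \<alpha>) < \<alpha> + t * (\<beta> - \<alpha>)" if "s < t" for s t
      using lt that by (simp add: mult_strict_right_mono)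
  qed
  then have h: "((\<lambda>s. (\<beta> - \<alpha>) * f (\<alpha> + s * (\<beta> - \<alpha>))) has_integral integral {\<alpha>..\<beta>} f) {0..1}"
    by simp
  show ?thesis by (rule integral_unique[OF h])
qed

lemma gam_bound:
  fixes u v e :: real
  assumes "0 \<le> u" "0 \<le> v" "0 < e"
  shows "(sqrt u + sqrt v)^2 \<le> (1 + e) * u + (1 + 1/e) * v"
proof -
  define A where "A = sqrt u"
  define B where "B = sqrt v"
  have A2: "A^2 = u" "0 \<le> A" unfolding A_def using assms by auto
  have B2: "B^2 = v" "0 \<le> B" unfolding B_def using assms by auto
  have "0 \<le> (e*A - B)^2" by simp
  then have "2*A*B*e \<le> e^2 * A^2 + B^2" by (simp add: power2_eq_square algebra_simps)
  then have "2*A*B \<le> e * A^2 + B^2 / e" using assms(3)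
    by (simp add: field_simps power2_eq_square)
  moreover have "(A + B)^2 = A^2 + B^2 + 2*A*B" by (simp add: power2_eq_square algebra_simps)
  ultimately have "(A + B)^2 \<le> (1 + e) * A^2 + (1 + 1/e) * B^2" by (simp add: algebra_simps)
  then show ?thesis using A2 B2 unfolding A_def B_def by simp
qed

lemma assemble:
  fixes \<Phi> F G :: "real \<Rightarrow> real"
  assumes finE: "finite E" and hF: "(F has_integral I) {0..1}" and hG: "(G has_integral t) {0..1}"
    and ptw: "\<And>s. s \<in> {0..1} - E \<Longrightarrow> 0 \<le> \<Phi> s \<and> \<Phi> s \<le> (1 + sqrt d) * F s + (1 + 1 / sqrt d) * M * G s"
    and I: "I \<le> J + M * t + K * d" and J: "0 \<le> J" "J \<le> M * R"
    and t: "0 \<le> t" "t \<le> d" and d: "0 < d" "d \<le> 1" and M: "0 \<le> M" and K: "0 \<le> K"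
  shows "integral {0..1} \<Phi> \<le> J + (M * R + 4 * M + 2 * K) * sqrt d"
proof -
  define e where "e = sqrt d"
  have e: "0 < e" "e \<le> 1" "e^2 = d" unfolding e_def using d by auto
  have hB: "((\<lambda>s. (1 + e) * F s + (1 + 1 / e) * M * G s) has_integral ((1 + e) * I + (1 + 1/e) * M * t)) {0..1}"
    using has_integral_add[OF has_integral_mult_right[OF hF, of "1 + e"] has_integral_mult_right[OF hG, of "(1 + 1/e) * M"]]
    by (simp add: mult.assoc)
  have "integral {0..1} \<Phi> \<le> (1 + e) * I + (1 + 1/e) * M * t"
    by (rule integral_le_spike[OF finE hB]) (use ptw in \<open>auto simp: e_def\<close>)
  also have "\<dots> \<le> J + (M * R + 4 * M + 2 * K) * e"
  proof -
    have "(1 + e) * I \<le> (1 + e) * (J + M * d + K * d)"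
      using I mult_left_mono[OF t(2) M] e by (intro mult_left_mono) auto
    also have "\<dots> = J + e * J + (1 + e) * (M + K) * e * e" using e by (simp add: algebra_simps power2_eq_square)
    also have "\<dots> \<le> J + e * (M * R) + 2 * (M + K) * e"
    proof -
      have "e * J \<le> e * (M * R)" using J e by (intro mult_left_mono) auto
      moreover have "(1 + e) * (M + K) * e * e \<le> 2 * (M + K) * e"
      proof -
        have "(1 + e) * e \<le> 2" using e by (smt (verit) mult_left_le)
        then have "((1 + e) * e) * ((M + K) * e) \<le> 2 * ((M + K) * e)"
          using M K e by (intro mult_right_mono) auto
        then show ?thesis by (simp add: algebra_simps)
      qed
      ultimately show ?thesis by linarith
    qed
    finally have A: "(1 + e) * I \<le> J + e * (M * R) + 2 * (M + K) * e" .
    have "(1 + 1/e) * M * t \<le> (1 + 1/e) * M * (e * e)"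
      using t e M by (intro mult_left_mono) (auto simp: power2_eq_square)
    also have "\<dots> = M * e * e + M * e" using e by (simp add: field_simps)
    also have "\<dots> \<le> 2 * M * e"
    proof -
      have "M * e * e \<le> M * e * 1" using M e by (intro mult_left_mono) auto
      then show ?thesis by simp
    qed
    finally have B: "(1 + 1/e) * M * t \<le> 2 * M * e" .
    show ?thesis using A B by (simp add: algebra_simps)
  qed
  finally show ?thesis unfolding e_def .
qed

lemma Wcone_iff: "v \<in> Wcone \<longleftrightarrow> 0 \<le> snd v \<and> 0 \<le> fst v + snd v"
  by (cases v) (auto simp: Wcone_def)

lemma claim1_upper:
  assumes pw: "pwconst f S" and f0: "\<And>t. 0 \<le> f t" and fM: "\<And>t. f t \<le> M"
    and adm: "admissible_path (a, 0) (z, t) x" and t: "0 \<le> t" "t \<le> d" and d: "0 < d" "d \<le> 1"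
    and az: "a \<le> z"
  shows "integral {0..1} (\<lambda>s. gam (vector_derivative x (at s)) * f (fst (x s)))
     \<le> integral {a..z} f + (M * (z - a) + 4 * M + 2 * (M * (2 * card S + 1))) * sqrt d"
proof -
  obtain T where finT: "finite T" and cont: "continuous_on {0..1} x" and x0: "x 0 = (a, 0)"
    and x1: "x 1 = (z, t)"
    and dv: "\<And>s. s \<in> {0<..<1} - T \<Longrightarrow> (x has_vector_derivative vector_derivative x (at s)) (at s)
        \<and> vector_derivative x (at s) \<in> Wcone"
    using adm_deriv[OF adm] by blast
  define D where "D s = vector_derivative x (at s)" for s
  define y where "y s = fst (x s) + snd (x s)" for s
  define y' where "y' s = fst (D s) + snd (D s)" for s
  have M0: "0 \<le> M" using f0[of 0] fM[of 0] by linarith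
  have conty: "continuous_on {0..1} y" unfolding y_def by (intro continuous_intros cont)
  have cont2: "continuous_on {0..1} (\<lambda>s. snd (x s))" by (intro continuous_intros cont)
  have dery: "(y has_real_derivative y' s) (at s)" if "s \<in> {0<..<1} - T" for s
    unfolding y_def y'_def D_def using hvd_fst[OF conjunct1[OF dv[OF that]]] hvd_snd[OF conjunct1[OF dv[OF that]]]
    by (rule DERIV_add)
  have der2: "((\<lambda>s. snd (x s)) has_real_derivative snd (D s)) (at s)" if "s \<in> {0<..<1} - T" for s
    unfolding D_def by (rule hvd_snd[OF conjunct1[OF dv[OF that]]])
  have Wc: "0 \<le> snd (D s) \<and> 0 \<le> y' s" if "s \<in> {0<..<1} - T" for s
    using dv[OF that] unfolding D_def y'_def Wcone_iff by auto
  have x2r: "0 \<le> snd (x s) \<and> snd (x s) \<le> t" if "s \<in> {0..1}" for s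
  proof -
    have "snd (x 0) \<le> snd (x s)" using that Wc
      by (intro mono_from_deriv[OF cont2 finT der2]) auto
    moreover have "snd (x s) \<le> snd (x 1)" using that Wc
      by (intro mono_from_deriv[OF cont2 finT der2]) auto
    ultimately show ?thesis using x0 x1 by simp
  qed
  have xi: "y s - d \<le> fst (x s) \<and> fst (x s) \<le> y s" if "s \<in> {0<..<1} - T" for s
    using x2r[of s] that t unfolding y_def by auto
  obtain F I where hF: "(F has_integral I) {0..1}"
    and I: "I \<le> integral {y 0..y 1} f + M * (2 * card S + 1) * d"
    and ptw: "\<forall>s\<in>{0<..<1} - T. y' s * f (fst (x s)) \<le> F s"
    using core_bound[OF pw f0 fM conty finT dery _ d(1) xi] Wc by blast
  have y01: "y 0 = a" "y 1 = z + t" using x0 x1 by (auto simp: y_def)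
  have fint: "f integrable_on {\<alpha>..\<beta>}" for \<alpha> \<beta>
    by (rule pwconst_integrable[OF pw, of M]) (use f0 fM in \<open>auto simp: abs_le_iff intro: order_trans[OF _ fM]\<close>)
  have "integral {a..z + t} f = integral {a..z} f + integral {z..z + t} f"
    using Henstock_Kurzweil_Integration.integral_combine[OF az _ fint, of "z + t"] t by simp
  moreover have "integral {z..z + t} f \<le> M * t"
  proof -
    have "integral {z..z + t} f \<le> integral {z..z + t} (\<lambda>_. M)"
      by (rule integral_le[OF fint]) (use fM in auto)
    then show ?thesis using t by (simp add: mult.commute)
  qed
  ultimately have I2: "I \<le> integral {a..z} f + M * t + (M * (2 * card S + 1)) * d"
    using I y01 by simp
  have J: "0 \<le> integral {a..z} f" "integral {a..z} f \<le> M * (z - a)"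
  proof -
    show "0 \<le> integral {a..z} f" by (rule integral_nonneg[OF fint]) (use f0 in auto)
    have "integral {a..z} f \<le> integral {a..z} (\<lambda>_. M)"
      by (rule integral_le[OF fint]) (use fM in auto)
    then show "integral {a..z} f \<le> M * (z - a)" using az by (simp add: mult.commute)
  qed
  have hG: "((\<lambda>s. snd (D s)) has_integral (snd (x 1) - snd (x 0))) {0..1}"
    by (rule ftc_path[OF cont2 finT der2])
  then have hG': "((\<lambda>s. snd (D s)) has_integral t) {0..1}" using x0 x1 by simp
  show ?thesis
  proof (rule assemble[OF _ hF hG' _ I2 J t d M0])
    show "finite (T \<union> {0, 1})" using finT by simp
    show "0 \<le> M * (2 * card S + 1)" using M0 by simp
    fix s assume s: "s \<in> {0..1} - (T \<union> {0, 1})"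
    then have s': "s \<in> {0<..<1} - T" by auto
    have e: "0 < sqrt d" using d by simp
    have g: "gam (D s) \<le> (1 + sqrt d) * y' s + (1 + 1 / sqrt d) * snd (D s)"
      unfolding gam_def y'_def using gam_bound[OF _ _ e, of "fst (D s) + snd (D s)" "snd (D s)"] Wc[OF s']
      by (simp add: y'_def)
    have g0: "0 \<le> gam (D s)" unfolding gam_def by simp
    have fx: "0 \<le> f (fst (x s))" "f (fst (x s)) \<le> M" using f0 fM by auto
    have "gam (D s) * f (fst (x s)) \<le> ((1 + sqrt d) * y' s + (1 + 1 / sqrt d) * snd (D s)) * f (fst (x s))"
      using g fx by (intro mult_right_mono) auto
    also have "\<dots> = (1 + sqrt d) * (y' s * f (fst (x s))) + (1 + 1 / sqrt d) * (snd (D s) * f (fst (x s)))"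
      by (simp add: algebra_simps)
    also have "\<dots> \<le> (1 + sqrt d) * F s + (1 + 1 / sqrt d) * (snd (D s) * M)"
    proof (rule add_mono)
      show "(1 + sqrt d) * (y' s * f (fst (x s))) \<le> (1 + sqrt d) * F s"
        using ptw s' e by (intro mult_left_mono) auto
      show "(1 + 1 / sqrt d) * (snd (D s) * f (fst (x s))) \<le> (1 + 1 / sqrt d) * (snd (D s) * M)"
        using Wc[OF s'] fx e by (intro mult_left_mono) auto
    qed
    finally show "0 \<le> gam (vector_derivative x (at s)) * f (fst (x s)) \<and>
        gam (vector_derivative x (at s)) * f (fst (x s)) \<le> (1 + sqrt d) * F s + (1 + 1 / sqrt d) * M * snd (D s)"
      using g0 fx unfolding D_def by (simp add: algebra_simps)
  qed
qed

lemma claim2_upper: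
  assumes pw: "pwconst f S" and f0: "\<And>t. 0 \<le> f t" and fM: "\<And>t. f t \<le> M"
    and adm: "admissible_path (-b, b) (-w, w + t) x" and t: "0 \<le> t" "t \<le> d" and d: "0 < d" "d \<le> 1"
    and bw: "b \<le> w"
  shows "integral {0..1} (\<lambda>s. gam (vector_derivative x (at s)) * f (- fst (x s)))
     \<le> integral {b..w} f + (M * (w - b) + 4 * M + 2 * (M * (2 * card S + 1))) * sqrt d"
proof -
  obtain T where finT: "finite T" and cont: "continuous_on {0..1} x" and x0: "x 0 = (-b, b)"
    and x1: "x 1 = (-w, w + t)"
    and dv: "\<And>s. s \<in> {0<..<1} - T \<Longrightarrow> (x has_vector_derivative vector_derivative x (at s)) (at s)
        \<and> vector_derivative x (at s) \<in> Wcone"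
    using adm_deriv[OF adm] by blast
  define D where "D s = vector_derivative x (at s)" for s
  define u where "u s = fst (x s) + snd (x s)" for s
  define u' where "u' s = fst (D s) + snd (D s)" for s
  have M0: "0 \<le> M" using f0[of 0] fM[of 0] by linarith
  have contu: "continuous_on {0..1} u" unfolding u_def by (intro continuous_intros cont)
  have cont2: "continuous_on {0..1} (\<lambda>s. snd (x s))" by (intro continuous_intros cont)
  have deru: "(u has_real_derivative u' s) (at s)" if "s \<in> {0<..<1} - T" for s
    unfolding u_def u'_def D_def using hvd_fst[OF conjunct1[OF dv[OF that]]] hvd_snd[OF conjunct1[OF dv[OF that]]]
    by (rule DERIV_add)
  have der2: "((\<lambda>s. snd (x s)) has_real_derivative snd (D s)) (at s)" if "s \<in> {0<..<1} - T" for s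
    unfolding D_def by (rule hvd_snd[OF conjunct1[OF dv[OF that]]])
  have Wc: "0 \<le> snd (D s) \<and> 0 \<le> u' s" if "s \<in> {0<..<1} - T" for s
    using dv[OF that] unfolding D_def u'_def Wcone_iff by auto
  have ur: "0 \<le> u s \<and> u s \<le> t" if "s \<in> {0..1}" for s
  proof -
    have "u 0 \<le> u s" using that Wc
      by (intro mono_from_deriv[OF contu finT deru]) auto
    moreover have "u s \<le> u 1" using that Wc
      by (intro mono_from_deriv[OF contu finT deru]) auto
    ultimately show ?thesis using x0 x1 by (simp add: u_def)
  qed
  have xi: "snd (x s) - d \<le> - fst (x s) \<and> - fst (x s) \<le> snd (x s)" if "s \<in> {0<..<1} - T" for s
    using ur[of s] that t unfolding u_def by auto
  obtain F I where hF: "(F has_integral I) {0..1}"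
    and I: "I \<le> integral {snd (x 0)..snd (x 1)} f + M * (2 * card S + 1) * d"
    and ptw: "\<forall>s\<in>{0<..<1} - T. snd (D s) * f (- fst (x s)) \<le> F s"
    using core_bound[OF pw f0 fM cont2 finT der2 _ d(1) xi] Wc by blast
  have fint: "f integrable_on {\<alpha>..\<beta>}" for \<alpha> \<beta>
    by (rule pwconst_integrable[OF pw, of M]) (use f0 fM in \<open>auto simp: abs_le_iff intro: order_trans[OF _ fM]\<close>)
  have "integral {b..w + t} f = integral {b..w} f + integral {w..w + t} f"
    using Henstock_Kurzweil_Integration.integral_combine[OF bw _ fint, of "w + t"] t by simp
  moreover have "integral {w..w + t} f \<le> M * t"
  proof -
    have "integral {w..w + t} f \<le> integral {w..w + t} (\<lambda>_. M)"
      by (rule integral_le[OF fint]) (use fM in auto)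
    then show ?thesis using t by (simp add: mult.commute)
  qed
  ultimately have I2: "I \<le> integral {b..w} f + M * t + (M * (2 * card S + 1)) * d"
    using I x0 x1 by simp
  have J: "0 \<le> integral {b..w} f" "integral {b..w} f \<le> M * (w - b)"
  proof -
    show "0 \<le> integral {b..w} f" by (rule integral_nonneg[OF fint]) (use f0 in auto)
    have "integral {b..w} f \<le> integral {b..w} (\<lambda>_. M)"
      by (rule integral_le[OF fint]) (use fM in auto)
    then show "integral {b..w} f \<le> M * (w - b)" using bw by (simp add: mult.commute)
  qed
  have hG: "(u' has_integral (u 1 - u 0)) {0..1}"
    by (rule ftc_path[OF contu finT deru])
  then have hG': "(u' has_integral t) {0..1}" using x0 x1 by (simp add: u_def)
  show ?thesis
  proof (rule assemble[OF _ hF hG' _ I2 J t d M0])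
    show "finite (T \<union> {0, 1})" using finT by simp
    show "0 \<le> M * (2 * card S + 1)" using M0 by simp
    fix s assume s: "s \<in> {0..1} - (T \<union> {0, 1})"
    then have s': "s \<in> {0<..<1} - T" by auto
    have e: "0 < sqrt d" using d by simp
    have gg: "gam (D s) = (sqrt (snd (D s)) + sqrt (u' s))^2"
      unfolding gam_def u'_def by (simp add: add.commute)
    have g: "gam (D s) \<le> (1 + sqrt d) * snd (D s) + (1 + 1 / sqrt d) * u' s"
      unfolding gg using gam_bound[OF _ _ e, of "snd (D s)" "u' s"] Wc[OF s'] by simp
    have g0: "0 \<le> gam (D s)" unfolding gam_def by simp
    have fx: "0 \<le> f (- fst (x s))" "f (- fst (x s)) \<le> M" using f0 fM by auto
    have "gam (D s) * f (- fst (x s)) \<le> ((1 + sqrt d) * snd (D s) + (1 + 1 / sqrt d) * u' s) * f (- fst (x s))"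
      using g fx by (intro mult_right_mono) auto
    also have "\<dots> = (1 + sqrt d) * (snd (D s) * f (- fst (x s))) + (1 + 1 / sqrt d) * (u' s * f (- fst (x s)))"
      by (simp add: algebra_simps)
    also have "\<dots> \<le> (1 + sqrt d) * F s + (1 + 1 / sqrt d) * (u' s * M)"
    proof (rule add_mono)
      show "(1 + sqrt d) * (snd (D s) * f (- fst (x s))) \<le> (1 + sqrt d) * F s"
        using ptw s' e by (intro mult_left_mono) auto
      show "(1 + 1 / sqrt d) * (u' s * f (- fst (x s))) \<le> (1 + 1 / sqrt d) * (u' s * M)"
        using Wc[OF s'] fx e by (intro mult_left_mono) auto
    qed
    finally show "0 \<le> gam (vector_derivative x (at s)) * f (- fst (x s)) \<and>
        gam (vector_derivative x (at s)) * f (- fst (x s)) \<le> (1 + sqrt d) * F s + (1 + 1 / sqrt d) * M * u' s"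
      using g0 fx unfolding D_def by (simp add: algebra_simps)
  qed
qed

lemma Gamma_le:
  assumes "admissible_path P Q x0"
    and "\<And>x. admissible_path P Q x \<Longrightarrow>
      integral {0..1} (\<lambda>s. gam (vector_derivative x (at s)) / c (fst (x s) - q)) \<le> B"
  shows "Gamma c q P Q \<le> B"
  unfolding Gamma_def by (rule cSup_least) (use assms in auto)

lemma Gamma_ge:
  assumes "admissible_path P Q x0"
    and "\<And>x. admissible_path P Q x \<Longrightarrow>
      integral {0..1} (\<lambda>s. gam (vector_derivative x (at s)) / c (fst (x s) - q)) \<le> B"
  shows "integral {0..1} (\<lambda>s. gam (vector_derivative x0 (at s)) / c (fst (x0 s) - q)) \<le> Gamma c q P Q"
  unfolding Gamma_def
proof (rule cSup_upper)
  show "bdd_above {integral {0..1} (\<lambda>s. gam (vector_derivative x (at s)) / c (fst (x s) - q)) | x. admissible_path P Q x}"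
    unfolding bdd_above_def using assms(2) by blast
qed (use assms(1) in blast)

theorem mainTheorem9:
  fixes c :: "real \<Rightarrow> real" and q z w :: real
  assumes "step_speed c" and "z > 0" and "w > 0"
  shows "\<exists>C::real.
     (\<forall>\<delta> a. 0 < \<delta> \<and> \<delta> \<le> 1 \<and> 0 \<le> a \<and> a \<le> z \<longrightarrow>
        Gamma c q (a, 0) (z, \<delta>) - Gamma c q (a, 0) (z, 0) \<le> C * sqrt \<delta>) \<and>
     (\<forall>\<delta> b. 0 < \<delta> \<and> \<delta> \<le> 1 \<and> 0 \<le> b \<and> b \<le> w \<longrightarrow>
        Gamma c q (-b, b) (-w, w + \<delta>) - Gamma c q (-b, b) (-w, w) \<le> C * sqrt \<delta>)"
proof -
  obtain S0 m MM where pwc: "pwconst c S0" and m: "0 < m" and cb: "\<And>x. m \<le> c x \<and> c x \<le> MM"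
    using step_speed_facts[OF assms(1)] by blast
  define g where "g t = inverse (c (t - q))" for t
  define k where "k t = inverse (c (- t - q))" for t
  define M where "M = inverse m"
  define Sg where "Sg = (\<lambda>s. (s - - q) / 1) ` S0"
  define Sk where "Sk = (\<lambda>s. (s - - q) / (- 1)) ` S0"
  have M0: "0 \<le> M" using m by (simp add: M_def)
  have pwg: "pwconst g Sg"
  proof -
    have "pwconst (\<lambda>t. inverse (c (1 * t + - q))) Sg"
      unfolding Sg_def by (rule pwconst_affine[OF pwc]) simp
    moreover have "(\<lambda>t. inverse (c (1 * t + - q))) = g" by (rule ext) (simp add: g_def)
    ultimately show ?thesis by simp
  qed
  have pwk: "pwconst k Sk"
  proof -
    have "pwconst (\<lambda>t. inverse (c ((- 1) * t + - q))) Sk"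
      unfolding Sk_def by (rule pwconst_affine[OF pwc]) simp
    moreover have "(\<lambda>t. inverse (c ((- 1) * t + - q))) = k" by (rule ext) (simp add: k_def)
    ultimately show ?thesis by simp
  qed
  have invb: "0 \<le> inverse (c x) \<and> inverse (c x) \<le> M" for x
  proof -
    have "m \<le> c x" using cb by blast
    then have "0 < c x" using m by linarith
    then show ?thesis using \<open>m \<le> c x\<close> m unfolding M_def by (auto intro: le_imp_inverse_le)
  qed
  have g0: "0 \<le> g t" and gM: "g t \<le> M" for t using invb unfolding g_def by auto
  have k0: "0 \<le> k t" and kM: "k t \<le> M" for t using invb unfolding k_def by auto
  define K1 where "K1 = M * (2 * card Sg + 1)"
  define K2 where "K2 = M * (2 * card Sk + 1)"
  have K0: "0 \<le> K1" "0 \<le> K2" using M0 unfolding K1_def K2_def by auto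
  define C where "C = M * z + M * w + 4 * M + 2 * K1 + 2 * K2"
  have eq1: "gam (vector_derivative x (at s)) / c (fst (x s) - q) = gam (vector_derivative x (at s)) * g (fst (x s))"
    for x :: "real \<Rightarrow> real \<times> real" and s
    by (simp add: g_def divide_inverse)
  have eq2: "gam (vector_derivative x (at s)) / c (fst (x s) - q) = gam (vector_derivative x (at s)) * k (- fst (x s))"
    for x :: "real \<Rightarrow> real \<times> real" and s
    by (simp add: k_def divide_inverse)
  have gbnd: "\<bar>g t\<bar> \<le> M" for t using g0 gM by simp
  have kbnd: "\<bar>k t\<bar> \<le> M" for t using k0 kM by simp
  have part1: "Gamma c q (a, 0) (z, \<delta>) - Gamma c q (a, 0) (z, 0) \<le> C * sqrt \<delta>"
    if h: "0 < \<delta>" "\<delta> \<le> 1" "0 \<le> a" "a \<le> z" for \<delta> a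
  proof -
    define J where "J = integral {a..z} g"
    define C1 where "C1 = M * (z - a) + 4 * M + 2 * K1"
    have up: "integral {0..1} (\<lambda>s. gam (vector_derivative x (at s)) / c (fst (x s) - q)) \<le> J + C1 * sqrt d"
      if "admissible_path (a, 0) (z, t) x" "0 \<le> t" "t \<le> d" "0 < d" "d \<le> 1" for x t d
      unfolding eq1 J_def C1_def K1_def using claim1_upper[OF pwg g0 gM that h(4)] by simp
    have up0: "integral {0..1} (\<lambda>s. gam (vector_derivative x (at s)) / c (fst (x s) - q)) \<le> J + C1 * sqrt 1"
      if "admissible_path (a, 0) (z, 0) x" for x
      using up[where x=x and t=0 and d=1] that by simp
    have "Gamma c q (a, 0) (z, \<delta>) \<le> J + C1 * sqrt \<delta>"
      by (rule Gamma_le[OF lin_adm]) (use h up in \<open>auto simp: Wcone_def\<close>)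
    moreover have "J \<le> Gamma c q (a, 0) (z, 0)"
    proof -
      have "integral {0..1} (\<lambda>s. gam (vector_derivative (lin (a, 0) (z, 0)) (at s)) / c (fst (lin (a, 0) (z, 0) s) - q))
            = integral {0..1} (\<lambda>s. (z - a) * g (a + s * (z - a)))"
        using h unfolding eq1 by (simp add: lin_vd lin_def gam_def)
      also have "\<dots> = J" unfolding J_def by (rule line_value[OF pwg gbnd h(4)])
      finally have eqJ: "integral {0..1} (\<lambda>s. gam (vector_derivative (lin (a, 0) (z, 0)) (at s)) / c (fst (lin (a, 0) (z, 0) s) - q)) = J" .
      have "integral {0..1} (\<lambda>s. gam (vector_derivative (lin (a, 0) (z, 0)) (at s)) / c (fst (lin (a, 0) (z, 0) s) - q))
            \<le> Gamma c q (a, 0) (z, 0)"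
        by (rule Gamma_ge[OF lin_adm, where B="J + C1 * sqrt 1"]) (use h up0 in \<open>auto simp: Wcone_def\<close>)
      then show ?thesis using eqJ by simp
    qed
    ultimately have "Gamma c q (a, 0) (z, \<delta>) - Gamma c q (a, 0) (z, 0) \<le> C1 * sqrt \<delta>" by linarith
    also have "C1 * sqrt \<delta> \<le> C * sqrt \<delta>"
    proof (rule mult_right_mono)
      have "M * (z - a) \<le> M * z" using M0 h by (intro mult_left_mono) auto
      moreover have "0 \<le> M * w" using M0 assms(3) by simp
      ultimately show "C1 \<le> C" unfolding C1_def C_def using K0 by linarith
    qed (use h in simp)
    finally show ?thesis .
  qed
  have part2: "Gamma c q (-b, b) (-w, w + \<delta>) - Gamma c q (-b, b) (-w, w) \<le> C * sqrt \<delta>"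
    if h: "0 < \<delta>" "\<delta> \<le> 1" "0 \<le> b" "b \<le> w" for \<delta> b
  proof -
    define J where "J = integral {b..w} k"
    define C2 where "C2 = M * (w - b) + 4 * M + 2 * K2"
    have up: "integral {0..1} (\<lambda>s. gam (vector_derivative x (at s)) / c (fst (x s) - q)) \<le> J + C2 * sqrt d"
      if "admissible_path (-b, b) (-w, w + t) x" "0 \<le> t" "t \<le> d" "0 < d" "d \<le> 1" for x t d
      unfolding eq2 J_def C2_def K2_def using claim2_upper[OF pwk k0 kM that h(4)] by simp
    have up0: "integral {0..1} (\<lambda>s. gam (vector_derivative x (at s)) / c (fst (x s) - q)) \<le> J + C2 * sqrt 1"
      if "admissible_path (-b, b) (-w, w) x" for x
      using up[where x=x and t=0 and d=1] that by simp
    have "Gamma c q (-b, b) (-w, w + \<delta>) \<le> J + C2 * sqrt \<delta>"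
      by (rule Gamma_le[OF lin_adm]) (use h up in \<open>auto simp: Wcone_def\<close>)
    moreover have "J \<le> Gamma c q (-b, b) (-w, w)"
    proof -
      have "integral {0..1} (\<lambda>s. gam (vector_derivative (lin (-b, b) (-w, w)) (at s)) / c (fst (lin (-b, b) (-w, w) s) - q))
            = integral {0..1} (\<lambda>s. (w - b) * k (b + s * (w - b)))"
        using h unfolding eq2 by (simp add: lin_vd lin_def gam_def algebra_simps)
      also have "\<dots> = J" unfolding J_def by (rule line_value[OF pwk kbnd h(4)])
      finally have eqJ: "integral {0..1} (\<lambda>s. gam (vector_derivative (lin (-b, b) (-w, w)) (at s)) / c (fst (lin (-b, b) (-w, w) s) - q)) = J" .
      have "integral {0..1} (\<lambda>s. gam (vector_derivative (lin (-b, b) (-w, w)) (at s)) / c (fst (lin (-b, b) (-w, w) s) - q))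
            \<le> Gamma c q (-b, b) (-w, w)"
        by (rule Gamma_ge[OF lin_adm, where B="J + C2 * sqrt 1"]) (use h up0 in \<open>auto simp: Wcone_def\<close>)
      then show ?thesis using eqJ by simp
    qed
    ultimately have "Gamma c q (-b, b) (-w, w + \<delta>) - Gamma c q (-b, b) (-w, w) \<le> C2 * sqrt \<delta>" by linarith
    also have "C2 * sqrt \<delta> \<le> C * sqrt \<delta>"
    proof (rule mult_right_mono)
      have "M * (w - b) \<le> M * w" using M0 h by (intro mult_left_mono) auto
      moreover have "0 \<le> M * z" using M0 assms(2) by simp
      ultimately show "C2 \<le> C" unfolding C2_def C_def using K0 by linarith
    qed (use h in simp)
    finally show ?thesis .
  qed
  show ?thesis using part1 part2 by blast
qed

end
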